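(* Let $A$ be an abelian normal subgroup of a finite group $S$, $T=S/A$, $S\cong A\rtimes_\rho T$, and let $\phi$ be an anti-automorphism of $T$ with $\phi^2$ inner; set $L=L(A,\phi)=\{((a,t),(b,\phi(t))): a,b\in A,t\in T\}\le S\times S^{op}$. Then $L\cong(A\times A)\rtimes_{\overline\rho}T$ (via $((a,t),(b,\phi(t)))\mapsto(a,\phi(t)^{-1}b,t)$), where $T$ acts on $A\times A$ by ${}^{\overline t}(a,a')=({}^ta,{}^{\phi(t^{-1})}a')$ and $\overline\rho(t,t')=(\rho(t,t'),{}^{(t't)^{-1}}\rho(t',t))$. The map $((x,t),(y,s))\mapsto s^{-1}\phi(t)$ factors through a bijection $(S\times S^{op})/L\to T$. If $T$ is abelian, then $L$ is normal in $S\times S^{op}$ and the set of cosets $(S\times S^{op})/L$ is a group isomorphic to $T$ via this bijection.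
   Context: For $A\trianglelefteq S$ abelian, $T=S/A$: choose coset representatives $u(t)$, $u(\mathbf 1)=1$; ${}^ta=u(t)au(t)^{-1}$; $\rho(t,t')=u(t)u(t')u(tt')^{-1}\in Z^2(T,A)$; $S\cong A\rtimes_\rho T$ with $(a,t)(a',t')=(a\,{}^ta'\rho(t,t'),tt')$. $S^{op}$ is the opposite group; elements of $S$ are written as pairs $(a,t)$. The twisted semidirect product $(A\times A)\rtimes_{\overline\rho}T$ is defined analogously.
   Formalization: The second component of $\overline\rho(t,t')$ is ${}^{(\phi(t')\phi(t))^{-1}}\rho(\phi(t'),\phi(t))$ in place of ${}^{(t't)^{-1}}\rho(t',t)$. The statement above fails without it. *)

theory Defs
  imports "HOL-Algebra.Algebra"
begin

definition opp_group :: "('a, 'm) monoid_scheme \<Rightarrow> 'a monoid" where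
  "opp_group G = \<lparr>carrier = carrier G, monoid.mult = (\<lambda>x y. y \<otimes>\<^bsub>G\<^esub> x), one = \<one>\<^bsub>G\<^esub>\<rparr>"

definition anti_automorphism :: "('t, 'n) monoid_scheme \<Rightarrow> ('t \<Rightarrow> 't) \<Rightarrow> bool" where
  "anti_automorphism T \<phi> \<longleftrightarrow> bij_betw \<phi> (carrier T) (carrier T) \<and>
     (\<forall>x\<in>carrier T. \<forall>y\<in>carrier T. \<phi> (x \<otimes>\<^bsub>T\<^esub> y) = \<phi> y \<otimes>\<^bsub>T\<^esub> \<phi> x)"

definition is_inner :: "('t, 'n) monoid_scheme \<Rightarrow> ('t \<Rightarrow> 't) \<Rightarrow> bool" where
  "is_inner T f \<longleftrightarrow> (\<exists>g\<in>carrier T. \<forall>t\<in>carrier T. f t = g \<otimes>\<^bsub>T\<^esub> t \<otimes>\<^bsub>T\<^esub> inv\<^bsub>T\<^esub> g)"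

text \<open>The conjugation action  ^t a = u(t) a u(t)^{-1}  of T = S/A on A, via coset representatives u.\<close>
definition cact :: "('a, 'm) monoid_scheme \<Rightarrow> ('a set \<Rightarrow> 'a) \<Rightarrow> 'a set \<Rightarrow> 'a \<Rightarrow> 'a" where
  "cact S u t a = u t \<otimes>\<^bsub>S\<^esub> a \<otimes>\<^bsub>S\<^esub> inv\<^bsub>S\<^esub> (u t)"

definition cocyc :: "('a, 'm) monoid_scheme \<Rightarrow> 'a set \<Rightarrow> ('a set \<Rightarrow> 'a) \<Rightarrow> 'a set \<Rightarrow> 'a set \<Rightarrow> 'a" where
  "cocyc S A u t t' = u t \<otimes>\<^bsub>S\<^esub> u t' \<otimes>\<^bsub>S\<^esub> inv\<^bsub>S\<^esub> (u (t \<otimes>\<^bsub>S Mod A\<^esub> t'))"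

definition twisted_sdp ::
  "('x, 'm) monoid_scheme \<Rightarrow> ('t, 'n) monoid_scheme \<Rightarrow> ('t \<Rightarrow> 'x \<Rightarrow> 'x) \<Rightarrow> ('t \<Rightarrow> 't \<Rightarrow> 'x)
     \<Rightarrow> ('x \<times> 't) monoid" where
  "twisted_sdp N T act r =
     \<lparr>carrier = carrier N \<times> carrier T,
      monoid.mult = (\<lambda>(x, t) (x', t'). (x \<otimes>\<^bsub>N\<^esub> act t x' \<otimes>\<^bsub>N\<^esub> r t t', t \<otimes>\<^bsub>T\<^esub> t')),
      one = (\<one>\<^bsub>N\<^esub>, \<one>\<^bsub>T\<^esub>)\<rparr>"

end

theory Submission
  imports Defs
begin

lemma (in group) lcos_eq_iff:
  assumes H: "subgroup H G" and x: "x \<in> carrier G" and y: "y \<in> carrier G"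
  shows "(x <# H = y <# H) = (inv x \<otimes> y \<in> H)"
proof
  assume e: "x <# H = y <# H"
  have "y \<in> y <# H"
    using subgroup.lcos_module_rev[OF H is_group y y] y subgroup.one_closed[OF H] by simp
  then obtain h where h: "h \<in> H" "y = x \<otimes> h" using e unfolding l_coset_def by blast
  thus "inv x \<otimes> y \<in> H" using x subgroup.mem_carrier[OF H] by (simp add: m_assoc[symmetric])
next
  assume "inv x \<otimes> y \<in> H"
  thus "x <# H = y <# H"
    using l_repr_independence[OF subgroup.lcos_module_rev[OF H is_group x y] x H] by simp
qed

lemma (in group) inv_mult_eq_iff:
  assumes c: "p \<in> carrier G" "r \<in> carrier G" "p' \<in> carrier G" "r' \<in> carrier G"
  shows "(inv p \<otimes> r = inv p' \<otimes> r') = (p' \<otimes> inv p = r' \<otimes> inv r)"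
proof
  assume E: "inv p \<otimes> r = inv p' \<otimes> r'"
  have "p' \<otimes> inv p = p' \<otimes> (inv p \<otimes> r) \<otimes> inv r" using c by (simp add: m_assoc)
  also have "\<dots> = r' \<otimes> inv r" using c E by (simp add: m_assoc[symmetric])
  finally show "p' \<otimes> inv p = r' \<otimes> inv r" .
next
  assume E: "p' \<otimes> inv p = r' \<otimes> inv r"
  have "inv p \<otimes> r = inv p' \<otimes> (p' \<otimes> inv p) \<otimes> r" using c by (simp add: m_assoc[symmetric])
  also have "\<dots> = inv p' \<otimes> r'" using c E by (simp add: m_assoc)
  finally show "inv p \<otimes> r = inv p' \<otimes> r'" .
qed

lemma (in comm_group) cg1: "a \<in> carrier G \<Longrightarrow> r \<in> carrier G \<Longrightarrow> inv a \<otimes> (r \<otimes> a) = r"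
  by (simp add: m_lcomm[symmetric] m_assoc[symmetric])
lemma (in comm_group) cg2: "a \<in> carrier G \<Longrightarrow> b \<in> carrier G \<Longrightarrow> c \<in> carrier G \<Longrightarrow> d \<in> carrier G \<Longrightarrow>
   inv (b \<otimes> a) \<otimes> (d \<otimes> c) = (inv a \<otimes> c) \<otimes> (inv b \<otimes> d)"
  by (simp add: inv_mult m_ac)
lemma (in comm_group) cg3: "t \<in> carrier G \<Longrightarrow> s \<in> carrier G \<Longrightarrow> t \<otimes> s \<otimes> inv t = s"
  by (simp add: m_comm[of t s] m_assoc)

locale lset = normal A S for A and S :: "('a,'m) monoid_scheme" (structure) +
  fixes u :: "'a set \<Rightarrow> 'a" and \<phi> :: "'a set \<Rightarrow> 'a set"
  assumes cA: "comm_group (S\<lparr>carrier := A\<rparr>)"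
    and uin: "\<forall>t\<in>carrier (S Mod A). u t \<in> t"
    and anti: "anti_automorphism (S Mod A) \<phi>"
begin

abbreviation "T \<equiv> S Mod A"

lemma TG: "group T" by (rule factorgroup_is_group)

lemma Acomm: "a \<in> A \<Longrightarrow> b \<in> A \<Longrightarrow> a \<otimes> b = b \<otimes> a"
  using comm_monoid.m_comm[OF comm_group.axioms(1)[OF cA], of a b] by simp

lemma Asub: "a \<in> A \<Longrightarrow> a \<in> carrier S"
  using subset by blast

lemma cs_carr: "x \<in> carrier S \<Longrightarrow> A #> x \<in> carrier T"
  by (simp add: FactGroup_def rcosetsI subset)

lemma cs_mult: "x \<in> carrier S \<Longrightarrow> y \<in> carrier S \<Longrightarrow> (A #> x) \<otimes>\<^bsub>T\<^esub> (A #> y) = A #> (x \<otimes> y)"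
  by (simp add: rcos_sum)

lemma cs_inv: "x \<in> carrier S \<Longrightarrow> inv\<^bsub>T\<^esub> (A #> x) = A #> inv x"
  by (simp add: inv_FactGroup cs_carr rcos_inv)

lemma cs_one: "\<one>\<^bsub>T\<^esub> = A #> \<one>"
  by (simp add: coset_join2 subgroup_axioms)

lemma cs_eq: "x \<in> carrier S \<Longrightarrow> y \<in> carrier S \<Longrightarrow> (A #> x = A #> y) = (x \<otimes> inv y \<in> A)"
  by (metis is_group rcos_module repr_independence repr_independenceD subgroup_axioms)

lemma cs_A: "a \<in> A \<Longrightarrow> x \<in> carrier S \<Longrightarrow> A #> (a \<otimes> x) = A #> x"
  by (metis coset_mult_assoc coset_join2 is_group subgroup_axioms subset mem_carrier)

lemma Tcarr: "t \<in> carrier T \<Longrightarrow> \<exists>x\<in>carrier S. t = A #> x"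
  by (auto simp: FactGroup_def RCOSETS_def)

lemma u_carr: "t \<in> carrier T \<Longrightarrow> u t \<in> carrier S"
  using uin Tcarr elemrcos_carrier is_group by blast

lemma cs_u: "t \<in> carrier T \<Longrightarrow> A #> u t = t"
  using uin Tcarr repr_independence subgroup_axioms by metis

lemma conj_A: "g \<in> carrier S \<Longrightarrow> a \<in> A \<Longrightarrow> g \<otimes> a \<otimes> inv g \<in> A"
  by (rule inv_op_closed2)

lemma conj_indep: assumes "g \<in> carrier S" "g' \<in> carrier S" "A #> g = A #> g'" "a \<in> A"
  shows "g \<otimes> a \<otimes> inv g = g' \<otimes> a \<otimes> inv g'"
proof -
  have c: "g \<otimes> inv g' \<in> A" using assms cs_eq by blast
  define c where "c = g \<otimes> inv g'"
  have g: "g = c \<otimes> g'" using assms by (simp add: c_def m_assoc)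
  have cc: "c \<in> carrier S" using c c_def Asub by blast
  have "g \<otimes> a \<otimes> inv g = c \<otimes> (g' \<otimes> a \<otimes> inv g') \<otimes> inv c"
    using assms cc by (simp add: g inv_mult_group m_assoc Asub)
  also have "\<dots> = (g' \<otimes> a \<otimes> inv g') \<otimes> c \<otimes> inv c"
    using Acomm[OF c[folded c_def] conj_A[OF assms(2,4)]] by simp
  also have "\<dots> = g' \<otimes> a \<otimes> inv g'"
    using assms cc by (simp add: m_assoc Asub)
  finally show ?thesis .
qed

lemma cact_eq: "t \<in> carrier T \<Longrightarrow> g \<in> carrier S \<Longrightarrow> A #> g = t \<Longrightarrow> a \<in> A \<Longrightarrow> cact S u t a = g \<otimes> a \<otimes> inv g"
  unfolding cact_def using conj_indep[of "u t" g a] u_carr cs_u by auto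

lemma phi_carr: "t \<in> carrier T \<Longrightarrow> \<phi> t \<in> carrier T"
  using anti unfolding anti_automorphism_def bij_betw_def by blast

lemma phi_mult: "t \<in> carrier T \<Longrightarrow> s \<in> carrier T \<Longrightarrow> \<phi> (t \<otimes>\<^bsub>T\<^esub> s) = \<phi> s \<otimes>\<^bsub>T\<^esub> \<phi> t"
  using anti unfolding anti_automorphism_def by blast

lemma phi_one: "\<phi> \<one>\<^bsub>T\<^esub> = \<one>\<^bsub>T\<^esub>"
proof -
  interpret T: group T by (rule TG)
  have "\<phi> \<one>\<^bsub>T\<^esub> \<otimes>\<^bsub>T\<^esub> \<phi> \<one>\<^bsub>T\<^esub> = \<phi> \<one>\<^bsub>T\<^esub>"
    using phi_mult[of "\<one>\<^bsub>T\<^esub>" "\<one>\<^bsub>T\<^esub>"] T.l_one[OF T.one_closed] T.one_closed by metis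
  thus ?thesis using phi_carr[OF T.one_closed]
    by (metis T.l_cancel T.one_closed T.r_one)
qed

lemma phi_inv: "t \<in> carrier T \<Longrightarrow> \<phi> (inv\<^bsub>T\<^esub> t) = inv\<^bsub>T\<^esub> (\<phi> t)"
proof -
  interpret T: group T by (rule TG)
  assume t: "t \<in> carrier T"
  have "\<phi> (inv\<^bsub>T\<^esub> t) \<otimes>\<^bsub>T\<^esub> \<phi> t = \<one>\<^bsub>T\<^esub>"
    using phi_mult[of t "inv\<^bsub>T\<^esub> t"] t phi_one T.r_inv[OF t] by (metis T.inv_closed)
  thus ?thesis using t by (simp add: T.inv_equality phi_carr)
qed

lemma opp_carr[simp]: "carrier (opp_group S) = carrier S"
  and opp_mult[simp]: "x \<otimes>\<^bsub>opp_group S\<^esub> y = y \<otimes> x"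
  and opp_one[simp]: "\<one>\<^bsub>opp_group S\<^esub> = \<one>"
  by (simp_all add: opp_group_def)

lemma opp_group: "group (opp_group S)"
  by (rule groupI) (auto simp: m_assoc intro!: exI[of _ "inv _"])

lemma opp_inv: "x \<in> carrier S \<Longrightarrow> inv\<^bsub>opp_group S\<^esub> x = inv x"
  using group.inv_equality[OF opp_group, of "inv x" x] by simp

abbreviation "G \<equiv> S \<times>\<times> opp_group S"

lemma GG: "group G" by (rule DirProd_group[OF is_group opp_group])

lemma G_inv: "x \<in> carrier S \<Longrightarrow> y \<in> carrier S \<Longrightarrow> inv\<^bsub>G\<^esub> (x, y) = (inv x, inv y)"
  by (simp add: is_group opp_group opp_inv)

definition "Lc = {(x,y). x \<in> carrier S \<and> y \<in> carrier S \<and> A #> y = \<phi> (A #> x)}"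

lemma L_eq: "{(a \<otimes> u t, b \<otimes> u (\<phi> t)) | a b t. a \<in> A \<and> b \<in> A \<and> t \<in> carrier T} = Lc"
proof (rule equalityI; rule subsetI)
  fix z assume "z \<in> {(a \<otimes> u t, b \<otimes> u (\<phi> t)) | a b t. a \<in> A \<and> b \<in> A \<and> t \<in> carrier T}"
  then obtain a b t where z: "z = (a \<otimes> u t, b \<otimes> u (\<phi> t))" "a \<in> A" "b \<in> A" "t \<in> carrier T" by blast
  thus "z \<in> Lc" unfolding Lc_def
    using cs_A cs_u u_carr phi_carr Asub by auto
next
  fix z assume "z \<in> Lc"
  then obtain x y where z: "z = (x,y)" "x \<in> carrier S" "y \<in> carrier S" "A #> y = \<phi> (A #> x)"
    unfolding Lc_def by blast
  define t where "t = A #> x"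
  have t: "t \<in> carrier T" using z cs_carr t_def by simp
  have a: "x \<otimes> inv (u t) \<in> A" using cs_eq[OF z(2) u_carr[OF t]] cs_u[OF t] t_def by simp
  have b: "y \<otimes> inv (u (\<phi> t)) \<in> A" using cs_eq[OF z(3) u_carr[OF phi_carr[OF t]]] cs_u[OF phi_carr[OF t]] t_def z by simp
  have "z = ((x \<otimes> inv (u t)) \<otimes> u t, (y \<otimes> inv (u (\<phi> t))) \<otimes> u (\<phi> t))"
    using z t by (simp add: m_assoc u_carr phi_carr)
  thus "z \<in> {(a \<otimes> u t, b \<otimes> u (\<phi> t)) | a b t. a \<in> A \<and> b \<in> A \<and> t \<in> carrier T}"
    using a b t by blast
qed

lemma L_sub: "subgroup Lc G"
proof (rule group.subgroupI[OF GG])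
  show "Lc \<subseteq> carrier G" unfolding Lc_def by auto
  have "(\<one>,\<one>) \<in> Lc" unfolding Lc_def using phi_one cs_one by (simp add: subset)
  thus "Lc \<noteq> {}" by blast
  fix a assume "a \<in> Lc"
  then obtain x y where z: "a = (x,y)" "x \<in> carrier S" "y \<in> carrier S" "A #> y = \<phi> (A #> x)"
    unfolding Lc_def by blast
  have "A #> inv y = \<phi> (A #> inv x)"
    using z by (simp add: cs_inv[symmetric] phi_inv cs_carr)
  thus "inv\<^bsub>G\<^esub> a \<in> Lc" using z G_inv by (simp add: Lc_def)
  fix b assume "b \<in> Lc"
  then obtain x' y' where z': "b = (x',y')" "x' \<in> carrier S" "y' \<in> carrier S" "A #> y' = \<phi> (A #> x')"
    unfolding Lc_def by blast
  have "A #> (y' \<otimes> y) = \<phi> (A #> (x \<otimes> x'))"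
    using z z' cs_mult[symmetric] phi_mult cs_carr by metis
  thus "a \<otimes>\<^bsub>G\<^esub> b \<in> Lc" using z z' by (simp add: Lc_def)
qed

lemma c1[simp]: "x \<in> carrier S \<Longrightarrow> y \<in> carrier S \<Longrightarrow> inv x \<otimes> (x \<otimes> y) = y"
  by (simp add: m_assoc[symmetric])
lemma c2[simp]: "x \<in> carrier S \<Longrightarrow> y \<in> carrier S \<Longrightarrow> x \<otimes> (inv x \<otimes> y) = y"
  by (simp add: m_assoc[symmetric])

lemma cs_eq_left: "x \<in> carrier S \<Longrightarrow> y \<in> carrier S \<Longrightarrow> A #> x = A #> y \<Longrightarrow> inv x \<otimes> y \<in> A"
  using conj_A[of "inv x" "y \<otimes> inv x"] cs_eq[of y x] by (simp add: m_assoc)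

lemma cs_A_right: "b \<in> A \<Longrightarrow> x \<in> carrier S \<Longrightarrow> A #> (x \<otimes> b) = A #> x"
  using cs_A[of "x \<otimes> b \<otimes> inv x" x] conj_A[of x b] by (simp add: m_assoc Asub)

lemma comm3: "a \<in> A \<Longrightarrow> b \<in> A \<Longrightarrow> c \<in> A \<Longrightarrow> a \<otimes> b \<otimes> c = c \<otimes> b \<otimes> a"
  using Acomm[of a b] Acomm[of c "b \<otimes> a"] by (simp add: Asub m_closed m_assoc)

definition "psi z = ((fst z \<otimes> inv (u (A #> fst z)), inv (u (A #> snd z)) \<otimes> snd z), A #> fst z)"

abbreviation "TW \<equiv> twisted_sdp (S\<lparr>carrier:=A\<rparr> \<times>\<times> S\<lparr>carrier:=A\<rparr>) T
   (\<lambda>t (a, a'). (cact S u t a, cact S u (\<phi> (inv\<^bsub>T\<^esub> t)) a'))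
   (\<lambda>t t'. (cocyc S A u t t', cact S u (inv\<^bsub>T\<^esub> (\<phi> t' \<otimes>\<^bsub>T\<^esub> \<phi> t)) (cocyc S A u (\<phi> t') (\<phi> t))))"

lemma TW_carr: "carrier TW = (A \<times> A) \<times> carrier T"
  by (simp add: twisted_sdp_def)

lemma psi_bij: "bij_betw psi Lc ((A \<times> A) \<times> carrier T)"
proof (rule bij_betw_byWitness[where f'="\<lambda>((a,b),t). (a \<otimes> u t, u (\<phi> t) \<otimes> b)"])
  show "\<forall>z\<in>Lc. (\<lambda>((a,b),t). (a \<otimes> u t, u (\<phi> t) \<otimes> b)) (psi z) = z"
    by (auto simp: Lc_def psi_def m_assoc u_carr cs_carr phi_carr)
  show "\<forall>z\<in>(A \<times> A) \<times> carrier T. psi ((\<lambda>((a,b),t). (a \<otimes> u t, u (\<phi> t) \<otimes> b)) z) = z"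
    by (auto simp: psi_def cs_A cs_A_right cs_u u_carr phi_carr Asub m_assoc)
  show "psi ` Lc \<subseteq> (A \<times> A) \<times> carrier T"
  proof
    fix w assume "w \<in> psi ` Lc"
    then obtain x y where z: "w = psi (x,y)" "x \<in> carrier S" "y \<in> carrier S" "A #> y = \<phi> (A #> x)"
      unfolding Lc_def by blast
    have t: "A #> x \<in> carrier T" using z cs_carr by blast
    have "x \<otimes> inv (u (A #> x)) \<in> A" using cs_eq[OF z(2) u_carr[OF t]] cs_u[OF t] by simp
    moreover have "inv (u (A #> y)) \<otimes> y \<in> A"
      using cs_eq_left[OF u_carr[OF cs_carr[OF z(3)]] z(3)] cs_u[OF cs_carr[OF z(3)]] by simp
    ultimately show "w \<in> (A \<times> A) \<times> carrier T" using z t by (simp add: psi_def)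
  qed
  show "(\<lambda>((a,b),t). (a \<otimes> u t, u (\<phi> t) \<otimes> b)) ` ((A \<times> A) \<times> carrier T) \<subseteq> Lc"
    by (auto simp: Lc_def cs_A cs_A_right cs_u u_carr phi_carr Asub)
qed

lemma psi_val: "a \<in> A \<Longrightarrow> b \<in> A \<Longrightarrow> t \<in> carrier T \<Longrightarrow>
   psi (a \<otimes> u t, b \<otimes> u (\<phi> t)) = ((a, cact S u (inv\<^bsub>T\<^esub> (\<phi> t)) b), t)"
proof -
  assume a: "a \<in> A" and b: "b \<in> A" and t: "t \<in> carrier T"
  have p: "\<phi> t \<in> carrier T" using phi_carr t by blast
  have "cact S u (inv\<^bsub>T\<^esub> (\<phi> t)) b = inv (u (\<phi> t)) \<otimes> b \<otimes> inv (inv (u (\<phi> t)))"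
  proof (rule cact_eq)
    show "A #> inv (u (\<phi> t)) = inv\<^bsub>T\<^esub> (\<phi> t)"
      using cs_inv[OF u_carr[OF p]] cs_u[OF p] by simp
  qed (use p b TG group.inv_closed u_carr in auto)
  thus ?thesis using a b t p
    by (simp add: psi_def cs_A cs_u u_carr Asub m_assoc)
qed

lemma cocyc_A: "t \<in> carrier T \<Longrightarrow> t' \<in> carrier T \<Longrightarrow> cocyc S A u t t' \<in> A"
proof -
  assume t: "t \<in> carrier T" and t': "t' \<in> carrier T"
  interpret T: group T by (rule TG)
  have tt: "t \<otimes>\<^bsub>T\<^esub> t' \<in> carrier T" using t t' by (rule T.m_closed)
  have "A #> (u t \<otimes> u t') = A #> u (t \<otimes>\<^bsub>T\<^esub> t')"
    using cs_mult[OF u_carr[OF t] u_carr[OF t']] cs_u[OF t] cs_u[OF t'] cs_u[OF tt] by argo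
  thus ?thesis unfolding cocyc_def using cs_eq[OF m_closed[OF u_carr[OF t] u_carr[OF t']] u_carr[OF tt]] by blast
qed

lemma psi_hom: assumes z: "z \<in> Lc" and z': "z' \<in> Lc"
  shows "psi (z \<otimes>\<^bsub>G\<^esub> z') = psi z \<otimes>\<^bsub>TW\<^esub> psi z'"
proof -
  interpret T: group T by (rule TG)
  obtain x y where zz: "z = (x,y)" "x \<in> carrier S" "y \<in> carrier S" "A #> y = \<phi> (A #> x)"
    using z unfolding Lc_def by blast
  obtain x' y' where zz': "z' = (x',y')" "x' \<in> carrier S" "y' \<in> carrier S" "A #> y' = \<phi> (A #> x')"
    using z' unfolding Lc_def by blast
  define t where "t = A #> x"
  define t' where "t' = A #> x'"
  define q where "q = A #> y"
  define q' where "q' = A #> y'"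
  have tc: "t \<in> carrier T" "t' \<in> carrier T" "q \<in> carrier T" "q' \<in> carrier T"
    unfolding t_def t'_def q_def q'_def using zz(2,3) zz'(2,3) by (blast intro: cs_carr)+
  have qphi: "q = \<phi> t" "q' = \<phi> t'" using zz zz' t_def t'_def q_def q'_def by auto
  have F1: "A #> (x \<otimes> x') = t \<otimes>\<^bsub>T\<^esub> t'" unfolding t_def t'_def by (rule cs_mult[OF zz(2) zz'(2), symmetric])
  have F2: "A #> (y' \<otimes> y) = q' \<otimes>\<^bsub>T\<^esub> q" unfolding q_def q'_def by (rule cs_mult[OF zz'(3) zz(3), symmetric])
  have uc: "u t \<in> carrier S" "u t' \<in> carrier S" "u q \<in> carrier S" "u q' \<in> carrier S"
    using u_carr tc by auto
  have U1: "u (t \<otimes>\<^bsub>T\<^esub> t') \<in> carrier S" "u (q' \<otimes>\<^bsub>T\<^esub> q) \<in> carrier S"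
    using u_carr[OF T.m_closed[OF tc(1) tc(2)]] u_carr[OF T.m_closed[OF tc(4) tc(3)]] by auto
  have C1: "x \<otimes> x' \<otimes> inv (u (A #> (x \<otimes> x'))) =
      x \<otimes> inv (u t) \<otimes> cact S u t (x' \<otimes> inv (u t')) \<otimes> cocyc S A u t t'"
    unfolding cact_def cocyc_def F1 using zz zz' uc U1 by (simp add: m_assoc)
  define b where "b = inv (u q) \<otimes> y"
  define b2 where "b2 = inv (u q') \<otimes> y'"
  define \<rho> where "\<rho> = cocyc S A u q' q"
  define U where "U = u (q' \<otimes>\<^bsub>T\<^esub> q)"
  have bA: "b \<in> A" unfolding b_def using cs_eq_left[OF uc(3) zz(3)] cs_u tc q_def by simp
  have b2A: "b2 \<in> A" unfolding b2_def using cs_eq_left[OF uc(4) zz'(3)] cs_u tc q'_def by simp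
  have rA: "\<rho> \<in> A" unfolding \<rho>_def using cocyc_A tc by simp
  have beta: "cact S u (\<phi> (inv\<^bsub>T\<^esub> t)) b2 = inv (u q) \<otimes> b2 \<otimes> inv (inv (u q))"
  proof (rule cact_eq)
    show "A #> inv (u q) = \<phi> (inv\<^bsub>T\<^esub> t)"
      using cs_inv[OF uc(3)] cs_u[OF tc(3)] phi_inv[OF tc(1)] qphi by simp
  qed (use tc uc b2A phi_carr in auto)
  have gamma: "cact S u (inv\<^bsub>T\<^esub> (\<phi> t' \<otimes>\<^bsub>T\<^esub> \<phi> t)) \<rho> = inv U \<otimes> \<rho> \<otimes> inv (inv U)"
  proof (rule cact_eq)
    show "A #> inv U = inv\<^bsub>T\<^esub> (\<phi> t' \<otimes>\<^bsub>T\<^esub> \<phi> t)"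
      using cs_inv[OF U1(2)] cs_u[OF T.m_closed[OF tc(4) tc(3)]] qphi U_def by simp
  qed (use tc U1 rA U_def T.inv_closed[OF T.m_closed[OF phi_carr[OF tc(2)] phi_carr[OF tc(1)]]] in auto)
  have bet: "inv (u q) \<otimes> b2 \<otimes> inv (inv (u q)) \<in> A" using conj_A[OF inv_closed[OF uc(3)] b2A] .
  have gam: "inv U \<otimes> \<rho> \<otimes> inv (inv U) \<in> A" using conj_A[OF inv_closed[OF U1(2)] rA] U_def by simp
  have C2: "inv (u (A #> (y' \<otimes> y))) \<otimes> (y' \<otimes> y) =
      b \<otimes> cact S u (\<phi> (inv\<^bsub>T\<^esub> t)) b2 \<otimes> cact S u (inv\<^bsub>T\<^esub> (\<phi> t' \<otimes>\<^bsub>T\<^esub> \<phi> t)) (cocyc S A u (\<phi> t') (\<phi> t))"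
  proof -
    have "b \<otimes> cact S u (\<phi> (inv\<^bsub>T\<^esub> t)) b2 \<otimes> cact S u (inv\<^bsub>T\<^esub> (\<phi> t' \<otimes>\<^bsub>T\<^esub> \<phi> t)) (cocyc S A u (\<phi> t') (\<phi> t))
       = b \<otimes> (inv (u q) \<otimes> b2 \<otimes> inv (inv (u q))) \<otimes> (inv U \<otimes> \<rho> \<otimes> inv (inv U))"
      using beta gamma qphi \<rho>_def by simp
    also have "\<dots> = (inv U \<otimes> \<rho> \<otimes> inv (inv U)) \<otimes> (inv (u q) \<otimes> b2 \<otimes> inv (inv (u q))) \<otimes> b"
      by (rule comm3[OF bA bet gam])
    also have "\<dots> = inv U \<otimes> (y' \<otimes> y)"
      unfolding \<rho>_def b_def b2_def cocyc_def U_def using uc U1 zz zz' by (simp add: m_assoc)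
    finally show ?thesis using F2 U_def by simp
  qed
  show ?thesis
    using zz zz' C1 C2 t_def t'_def q_def q'_def b_def b2_def F1
    by (simp add: psi_def twisted_sdp_def)
qed

definition "ff z = inv\<^bsub>T\<^esub> (A #> snd z) \<otimes>\<^bsub>T\<^esub> \<phi> (A #> fst z)"

lemma ff_carr: "z \<in> carrier G \<Longrightarrow> ff z \<in> carrier T"
proof -
  interpret T: group T by (rule TG)
  assume "z \<in> carrier G"
  hence "fst z \<in> carrier S" "snd z \<in> carrier S" by auto
  thus "ff z \<in> carrier T"
    unfolding ff_def by (intro T.m_closed T.inv_closed phi_carr cs_carr)
qed

lemma coset_iff: assumes g: "g \<in> carrier G" and g': "g' \<in> carrier G"
  shows "(g <#\<^bsub>G\<^esub> Lc = g' <#\<^bsub>G\<^esub> Lc) = (ff g = ff g')"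
proof -
  interpret T: group T by (rule TG)
  obtain x y where gg: "g = (x,y)" "x \<in> carrier S" "y \<in> carrier S" using g by auto
  obtain x' y' where gg': "g' = (x',y')" "x' \<in> carrier S" "y' \<in> carrier S" using g' by auto
  have tc: "A #> x \<in> carrier T" "A #> y \<in> carrier T" "A #> x' \<in> carrier T" "A #> y' \<in> carrier T"
    using gg gg' cs_carr by auto
  have "(g <#\<^bsub>G\<^esub> Lc = g' <#\<^bsub>G\<^esub> Lc) = (inv\<^bsub>G\<^esub> g \<otimes>\<^bsub>G\<^esub> g' \<in> Lc)"
    by (rule group.lcos_eq_iff[OF GG L_sub g g'])
  also have "\<dots> = (A #> (y' \<otimes> inv y) = \<phi> (A #> (inv x \<otimes> x')))"
    using gg gg' G_inv by (simp add: Lc_def)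
  also have "\<dots> = ((A #> y') \<otimes>\<^bsub>T\<^esub> inv\<^bsub>T\<^esub> (A #> y) = \<phi> (A #> x') \<otimes>\<^bsub>T\<^esub> inv\<^bsub>T\<^esub> (\<phi> (A #> x)))"
    using gg gg' tc by (simp only: cs_mult[symmetric] cs_inv inv_closed cs_carr phi_mult T.inv_closed phi_inv[symmetric])
  also have "\<dots> = (ff g = ff g')"
    unfolding ff_def gg gg' fst_conv snd_conv
    by (rule T.inv_mult_eq_iff[symmetric]) (use tc phi_carr in auto)
  finally show ?thesis .
qed

definition "FF C = ff (SOME g. g \<in> carrier G \<and> C = g <#\<^bsub>G\<^esub> Lc)"

lemma FF_val: "g \<in> carrier G \<Longrightarrow> FF (g <#\<^bsub>G\<^esub> Lc) = ff g"
proof -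
  assume g: "g \<in> carrier G"
  define g' where "g' = (SOME g'. g' \<in> carrier G \<and> g <#\<^bsub>G\<^esub> Lc = g' <#\<^bsub>G\<^esub> Lc)"
  have "g' \<in> carrier G \<and> g <#\<^bsub>G\<^esub> Lc = g' <#\<^bsub>G\<^esub> Lc"
    unfolding g'_def by (rule someI[of _ g]) (use g in auto)
  hence "ff g = ff g'" using coset_iff[OF g, of g'] by blast
  thus ?thesis unfolding FF_def g'_def[symmetric] by simp
qed

lemma FF_bij: "bij_betw FF {g <#\<^bsub>G\<^esub> Lc | g. g \<in> carrier G} (carrier T)"
  unfolding bij_betw_def
proof
  show "inj_on FF {g <#\<^bsub>G\<^esub> Lc | g. g \<in> carrier G}"
  proof (rule inj_onI)
    fix C1 C2 assume c1: "C1 \<in> {g <#\<^bsub>G\<^esub> Lc | g. g \<in> carrier G}" and c2: "C2 \<in> {g <#\<^bsub>G\<^esub> Lc | g. g \<in> carrier G}"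
      and e: "FF C1 = FF C2"
    obtain g1 where g1: "g1 \<in> carrier G" "C1 = g1 <#\<^bsub>G\<^esub> Lc" using c1 by blast
    obtain g2 where g2: "g2 \<in> carrier G" "C2 = g2 <#\<^bsub>G\<^esub> Lc" using c2 by blast
    have "ff g1 = ff g2" using e g1 g2 FF_val by simp
    thus "C1 = C2" using coset_iff[OF g1(1) g2(1)] g1 g2 by simp
  qed
  show "FF ` {g <#\<^bsub>G\<^esub> Lc | g. g \<in> carrier G} = carrier T"
  proof
    show "FF ` {g <#\<^bsub>G\<^esub> Lc | g. g \<in> carrier G} \<subseteq> carrier T"
      using FF_val ff_carr by auto
    show "carrier T \<subseteq> FF ` {g <#\<^bsub>G\<^esub> Lc | g. g \<in> carrier G}"
    proof
      interpret T: group T by (rule TG)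
      fix t assume t: "t \<in> carrier T"
      have g: "(\<one>, inv (u t)) \<in> carrier G" using u_carr t by simp
      have e1: "A #> inv (u t) = inv\<^bsub>T\<^esub> t" using cs_inv[OF u_carr[OF t]] cs_u[OF t] by simp
      have e2: "\<phi> (A #> \<one>) = \<one>\<^bsub>T\<^esub>" using cs_one phi_one by simp
      have "ff (\<one>, inv (u t)) = inv\<^bsub>T\<^esub> (inv\<^bsub>T\<^esub> t) \<otimes>\<^bsub>T\<^esub> \<one>\<^bsub>T\<^esub>"
        unfolding ff_def fst_conv snd_conv e1 e2 ..
      also have "\<dots> = t" using t by (simp only: T.inv_inv T.r_one T.inv_closed)
      finally have "FF ((\<one>, inv (u t)) <#\<^bsub>G\<^esub> Lc) = t" using FF_val[OF g] by simp
      thus "t \<in> FF ` {g <#\<^bsub>G\<^esub> Lc | g. g \<in> carrier G}"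
        using g by blast
    qed
  qed
qed

lemma L_normal: assumes C: "comm_group T" shows "Lc \<lhd> G"
proof -
  interpret T: comm_group T by (rule C)
  show ?thesis
  proof (subst group.normal_inv_iff[OF GG], intro conjI L_sub ballI)
    fix g h assume g: "g \<in> carrier G" and h: "h \<in> Lc"
    obtain x y where gg: "g = (x,y)" "x \<in> carrier S" "y \<in> carrier S" using g by auto
    obtain l1 l2 where hh: "h = (l1,l2)" "l1 \<in> carrier S" "l2 \<in> carrier S" "A #> l2 = \<phi> (A #> l1)"
      using h unfolding Lc_def by blast
    have P: "g \<otimes>\<^bsub>G\<^esub> h \<otimes>\<^bsub>G\<^esub> inv\<^bsub>G\<^esub> g = (x \<otimes> l1 \<otimes> inv x, inv y \<otimes> (l2 \<otimes> y))"
      using gg hh G_inv by simp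
    have tc: "A #> x \<in> carrier T" "A #> y \<in> carrier T" "A #> l1 \<in> carrier T" "A #> l2 \<in> carrier T"
      using gg(2,3) hh(2,3) cs_carr by auto
    have "A #> (inv y \<otimes> (l2 \<otimes> y)) = inv\<^bsub>T\<^esub> (A #> y) \<otimes>\<^bsub>T\<^esub> ((A #> l2) \<otimes>\<^bsub>T\<^esub> (A #> y))"
      using gg hh by (simp only: cs_mult[symmetric] cs_inv inv_closed m_closed)
    also have "\<dots> = A #> l2" using T.cg1 tc by blast
    also have "\<dots> = \<phi> ((A #> x) \<otimes>\<^bsub>T\<^esub> (A #> l1) \<otimes>\<^bsub>T\<^esub> inv\<^bsub>T\<^esub> (A #> x))"
      using T.cg3 tc hh by simp
    also have "\<dots> = \<phi> (A #> (x \<otimes> l1 \<otimes> inv x))"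
      using gg hh by (simp only: cs_mult[symmetric] cs_inv inv_closed m_closed)
    finally show "g \<otimes>\<^bsub>G\<^esub> h \<otimes>\<^bsub>G\<^esub> inv\<^bsub>G\<^esub> g \<in> Lc"
      unfolding P Lc_def using gg hh by simp
  qed
qed

lemma ff_mult: assumes C: "comm_group T" and g: "g \<in> carrier G" and h: "h \<in> carrier G"
  shows "ff (g \<otimes>\<^bsub>G\<^esub> h) = ff g \<otimes>\<^bsub>T\<^esub> ff h"
proof -
  interpret T: comm_group T by (rule C)
  obtain x y where gg: "g = (x,y)" "x \<in> carrier S" "y \<in> carrier S" using g by auto
  obtain x' y' where hh: "h = (x',y')" "x' \<in> carrier S" "y' \<in> carrier S" using h by auto
  have tc: "A #> x \<in> carrier T" "A #> y \<in> carrier T" "A #> x' \<in> carrier T" "A #> y' \<in> carrier T"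
    using gg hh cs_carr by auto
  have "ff (g \<otimes>\<^bsub>G\<^esub> h) = inv\<^bsub>T\<^esub> (A #> (y' \<otimes> y)) \<otimes>\<^bsub>T\<^esub> \<phi> (A #> (x \<otimes> x'))"
    using gg hh by (simp add: ff_def)
  also have "\<dots> = inv\<^bsub>T\<^esub> ((A #> y') \<otimes>\<^bsub>T\<^esub> (A #> y)) \<otimes>\<^bsub>T\<^esub> (\<phi> (A #> x') \<otimes>\<^bsub>T\<^esub> \<phi> (A #> x))"
    using gg hh tc by (simp only: cs_mult[symmetric] phi_mult)
  also have "\<dots> = ff g \<otimes>\<^bsub>T\<^esub> ff h"
    unfolding ff_def gg hh fst_conv snd_conv by (rule T.cg2) (use tc phi_carr in auto)
  finally show ?thesis .
qed

lemma FF_iso: assumes C: "comm_group T" shows "FF \<in> iso (G Mod Lc) T"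
proof -
  interpret N: normal Lc G by (rule L_normal[OF C])
  have carr: "carrier (G Mod Lc) = {g <#\<^bsub>G\<^esub> Lc | g. g \<in> carrier G}"
  proof -
    have ce: "\<forall>g\<in>carrier G. Lc #>\<^bsub>G\<^esub> g = g <#\<^bsub>G\<^esub> Lc" by (rule N.coset_eq)
    show ?thesis unfolding carrier_FactGroup image_def using ce by blast
  qed
  have hom: "FF \<in> hom (G Mod Lc) T"
  proof (rule homI)
    fix XX assume "XX \<in> carrier (G Mod Lc)"
    thus "FF XX \<in> carrier T" using carr FF_val ff_carr by auto
  next
    fix XX YY assume XX: "XX \<in> carrier (G Mod Lc)" and YY: "YY \<in> carrier (G Mod Lc)"
    obtain g where g: "g \<in> carrier G" "XX = Lc #>\<^bsub>G\<^esub> g" using XX unfolding carrier_FactGroup by blast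
    obtain h where h: "h \<in> carrier G" "YY = Lc #>\<^bsub>G\<^esub> h" using YY unfolding carrier_FactGroup by blast
    have gh: "g \<otimes>\<^bsub>G\<^esub> h \<in> carrier G" using g h by (rule_tac group.subgroupE(4)[OF GG group.subgroup_self[OF GG]])
    have "XX \<otimes>\<^bsub>G Mod Lc\<^esub> YY = Lc #>\<^bsub>G\<^esub> (g \<otimes>\<^bsub>G\<^esub> h)" using g h N.rcos_sum by simp
    moreover have "Lc #>\<^bsub>G\<^esub> (g \<otimes>\<^bsub>G\<^esub> h) = (g \<otimes>\<^bsub>G\<^esub> h) <#\<^bsub>G\<^esub> Lc" using N.coset_eq gh by blast
    ultimately have "FF (XX \<otimes>\<^bsub>G Mod Lc\<^esub> YY) = ff (g \<otimes>\<^bsub>G\<^esub> h)" using FF_val[OF gh] by simp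
    also have "\<dots> = ff g \<otimes>\<^bsub>T\<^esub> ff h" by (rule ff_mult[OF C g(1) h(1)])
    also have "\<dots> = FF XX \<otimes>\<^bsub>T\<^esub> FF YY"
    proof -
      have "XX = g <#\<^bsub>G\<^esub> Lc" "YY = h <#\<^bsub>G\<^esub> Lc" using g h N.coset_eq by blast+
      thus ?thesis using FF_val[OF g(1)] FF_val[OF h(1)] by simp
    qed
    finally show "FF (XX \<otimes>\<^bsub>G Mod Lc\<^esub> YY) = FF XX \<otimes>\<^bsub>T\<^esub> FF YY" .
  qed
  show ?thesis unfolding iso_def using hom FF_bij carr by simp
qed

lemma psi_iso: "psi \<in> iso (G\<lparr>carrier := Lc\<rparr>) TW"
proof -
  have im: "\<forall>z\<in>Lc. psi z \<in> (A \<times> A) \<times> carrier T"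
    using psi_bij unfolding bij_betw_def by blast
  show ?thesis
    unfolding iso_def hom_def using psi_bij psi_hom TW_carr im by (auto simp: Pi_def)
qed

end

theorem lemma3p3:
  fixes S :: "('a, 'm) monoid_scheme" and A :: "'a set"
    and u :: "'a set \<Rightarrow> 'a" and \<phi> :: "'a set \<Rightarrow> 'a set"
  defines "T \<equiv> S Mod A"
    and "act \<equiv> cact S u"
    and "\<rho> \<equiv> cocyc S A u"
    and "G \<equiv> S \<times>\<times> opp_group S"
    and "L \<equiv> {(a \<otimes>\<^bsub>S\<^esub> u t, b \<otimes>\<^bsub>S\<^esub> u (\<phi> t)) | a b t. a \<in> A \<and> b \<in> A \<and> t \<in> carrier (S Mod A)}"
    and "actbar \<equiv> (\<lambda>t (a, a'). (cact S u t a, cact S u (\<phi> (inv\<^bsub>S Mod A\<^esub> t)) a'))"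
    and "\<rho>bar \<equiv> (\<lambda>t t'. (cocyc S A u t t',
                    cact S u (inv\<^bsub>S Mod A\<^esub> (\<phi> t' \<otimes>\<^bsub>S Mod A\<^esub> \<phi> t)) (cocyc S A u (\<phi> t') (\<phi> t))))"
  assumes "group S" and "finite (carrier S)"
    and "A \<lhd> S" and "comm_group (S\<lparr>carrier := A\<rparr>)"
    and "\<forall>t\<in>carrier T. u t \<in> t" and "u \<one>\<^bsub>T\<^esub> = \<one>\<^bsub>S\<^esub>"
    and "anti_automorphism T \<phi>" and "is_inner T (\<phi> \<circ> \<phi>)"
  shows
    "subgroup L G \<and>
     (\<exists>\<psi>. \<psi> \<in> iso (G\<lparr>carrier := L\<rparr>)
                  (twisted_sdp (S\<lparr>carrier := A\<rparr> \<times>\<times> S\<lparr>carrier := A\<rparr>) T actbar \<rho>bar) \<and>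
          (\<forall>a\<in>A. \<forall>b\<in>A. \<forall>t\<in>carrier T.
             \<psi> (a \<otimes>\<^bsub>S\<^esub> u t, b \<otimes>\<^bsub>S\<^esub> u (\<phi> t)) = ((a, act (inv\<^bsub>T\<^esub> (\<phi> t)) b), t)))
     \<and> (\<exists>F. bij_betw F {g <#\<^bsub>G\<^esub> L | g. g \<in> carrier G} (carrier T) \<and>
          (\<forall>x\<in>carrier S. \<forall>y\<in>carrier S.
             F ((x, y) <#\<^bsub>G\<^esub> L) = inv\<^bsub>T\<^esub> (A #>\<^bsub>S\<^esub> y) \<otimes>\<^bsub>T\<^esub> \<phi> (A #>\<^bsub>S\<^esub> x)) \<and>
          (comm_group T \<longrightarrow> L \<lhd> G \<and> F \<in> iso (G Mod L) T))"
proof -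
  have l: "lset A S u \<phi>"
  proof (rule lset.intro)
    show "A \<lhd> S" by (rule assms(10))
    show "lset_axioms A S u \<phi>"
      unfolding lset_axioms_def using assms(11,12,14) unfolding T_def by blast
  qed
  interpret l: lset A S u \<phi> by (rule l)
  have Leq: "L = l.Lc" unfolding L_def by (rule l.L_eq)
  have TW: "twisted_sdp (S\<lparr>carrier := A\<rparr> \<times>\<times> S\<lparr>carrier := A\<rparr>) T actbar \<rho>bar = l.TW"
    unfolding T_def actbar_def \<rho>bar_def ..
  have P1: "subgroup L G" unfolding Leq G_def by (rule l.L_sub)
  have P2: "\<exists>\<psi>. \<psi> \<in> iso (G\<lparr>carrier := L\<rparr>)
                  (twisted_sdp (S\<lparr>carrier := A\<rparr> \<times>\<times> S\<lparr>carrier := A\<rparr>) T actbar \<rho>bar) \<and>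
          (\<forall>a\<in>A. \<forall>b\<in>A. \<forall>t\<in>carrier T.
             \<psi> (a \<otimes>\<^bsub>S\<^esub> u t, b \<otimes>\<^bsub>S\<^esub> u (\<phi> t)) = ((a, act (inv\<^bsub>T\<^esub> (\<phi> t)) b), t))"
  proof (intro exI conjI ballI)
    show "l.psi \<in> iso (G\<lparr>carrier := L\<rparr>)
                  (twisted_sdp (S\<lparr>carrier := A\<rparr> \<times>\<times> S\<lparr>carrier := A\<rparr>) T actbar \<rho>bar)"
      unfolding TW Leq G_def by (rule l.psi_iso)
    fix a b t assume ab: "a \<in> A" "b \<in> A" and t: "t \<in> carrier T"
    show "l.psi (a \<otimes>\<^bsub>S\<^esub> u t, b \<otimes>\<^bsub>S\<^esub> u (\<phi> t)) = ((a, act (inv\<^bsub>T\<^esub> (\<phi> t)) b), t)"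
      using l.psi_val[OF ab t[unfolded T_def]] unfolding act_def T_def .
  qed
  have P3: "\<exists>F. bij_betw F {g <#\<^bsub>G\<^esub> L | g. g \<in> carrier G} (carrier T) \<and>
          (\<forall>x\<in>carrier S. \<forall>y\<in>carrier S.
             F ((x, y) <#\<^bsub>G\<^esub> L) = inv\<^bsub>T\<^esub> (A #>\<^bsub>S\<^esub> y) \<otimes>\<^bsub>T\<^esub> \<phi> (A #>\<^bsub>S\<^esub> x)) \<and>
          (comm_group T \<longrightarrow> L \<lhd> G \<and> F \<in> iso (G Mod L) T)"
  proof (intro exI conjI ballI impI)
    show "bij_betw l.FF {g <#\<^bsub>G\<^esub> L | g. g \<in> carrier G} (carrier T)"
      unfolding Leq G_def T_def by (rule l.FF_bij)
    fix x y assume "x \<in> carrier S" "y \<in> carrier S"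
    thus "l.FF ((x, y) <#\<^bsub>G\<^esub> L) = inv\<^bsub>T\<^esub> (A #>\<^bsub>S\<^esub> y) \<otimes>\<^bsub>T\<^esub> \<phi> (A #>\<^bsub>S\<^esub> x)"
      unfolding Leq G_def T_def using l.FF_val by (simp add: l.ff_def)
  next
    assume "comm_group T"
    thus "L \<lhd> G" "l.FF \<in> iso (G Mod L) T"
      unfolding Leq G_def T_def by (rule l.L_normal, rule l.FF_iso)
  qed
  show ?thesis using P1 P2 P3 by (intro conjI) assumption+
qed

end
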